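(* Let $\nu$ be a probability density on $\mathsf{X}\subset\mathbb{R}^{d_{x}}$, for each $x\in\mathsf{X}$ let $f_{x}$ be a probability density on $\mathsf{Y}\subset\mathbb{R}^{d}$, fix $y\in\mathsf{Y}$ and $\epsilon>0$, and set $\ell_{\mathrm{ABC}}(x):=\mathbb{P}_{x}(|z-y|<\epsilon)$ for $z\sim f_{x}$, assumed positive for all $x$. Let $\pi(\mathrm{d}x)\propto\nu(x)\ell_{\mathrm{ABC}}(x)\mathrm{d}x$. For $N\in\mathbb{N}$ and $x\in\mathsf{X}$, let $z_{1},\dots,z_{N}\overset{\mathrm{iid}}{\sim}f_{x}$, $W_{j}:=1/\ell_{\mathrm{ABC}}(x)$ if $|z_{j}-y|<\epsilon$ and $W_{j}:=0$ otherwise, $\mathcal{W}_{N}:=\frac{1}{N}\sum_{j=1}^{N}W_{j}$, let $Q_{x}$ be the law of $\mathcal{W}_{N}$ and $\tilde{\pi}_{x}(\mathrm{d}w):=wQ_{x}(\mathrm{d}w)$. Let $p\in\mathbb{N}$ and suppose $\int_{\mathsf{X}}\nu(x)\ell_{\mathrm{ABC}}^{-(p-1)}(x)\,\mathrm{d}x<\infty$. Then there is $C_{N,p}>0$ such that for all $s>0$, \[ \int_{\mathsf{X}}\pi(\mathrm{d}x)\,\tilde{\pi}_{x}(\mathcal{W}_{N}\ge s)\le C_{N,p}\,s^{-p}, \] and $C_{N,p}=1+O(1/N)$ as $N\to\infty$. In particular, the hypothesis holds for $p=1$.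
   Context: $|\cdot|$ is the Euclidean norm. Under $Q_{x}$, $\mathcal{W}_{N}$ has mean $1$, and $\ell_{\mathrm{ABC}}(x)\sum_{j}W_{j}\sim\mathrm{Bin}(N,\ell_{\mathrm{ABC}}(x))$. *)

theory Defs
  imports "HOL-Analysis.Analysis" "HOL-Library.Landau_Symbols"
begin

definition fmeas :: "('x \<Rightarrow> 'y::euclidean_space \<Rightarrow> real) \<Rightarrow> 'y set \<Rightarrow> 'x \<Rightarrow> 'y measure" where
  "fmeas f Y x = density lborel (\<lambda>z. ennreal (indicator Y z * f x z))"

definition lABC :: "('x \<Rightarrow> 'y::euclidean_space \<Rightarrow> real) \<Rightarrow> 'y set \<Rightarrow> 'y \<Rightarrow> real \<Rightarrow> 'x \<Rightarrow> real" where
  "lABC f Y y \<epsilon> x = measure (fmeas f Y x) {z. norm (z - y) < \<epsilon>}"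

text \<open>The estimator W_N as a function of the sample (z_1,...,z_N), indexed by {..<N}.\<close>
definition WN :: "('x \<Rightarrow> 'y::euclidean_space \<Rightarrow> real) \<Rightarrow> 'y set \<Rightarrow> 'y \<Rightarrow> real \<Rightarrow> nat \<Rightarrow> 'x \<Rightarrow> (nat \<Rightarrow> 'y) \<Rightarrow> real" where
  "WN f Y y \<epsilon> N x \<omega> = (1 / real N) *
     (\<Sum>j<N. if norm (\<omega> j - y) < \<epsilon> then 1 / lABC f Y y \<epsilon> x else 0)"

definition Qlaw :: "('x \<Rightarrow> 'y::euclidean_space \<Rightarrow> real) \<Rightarrow> 'y set \<Rightarrow> 'y \<Rightarrow> real \<Rightarrow> nat \<Rightarrow> 'x \<Rightarrow> real measure" where
  "Qlaw f Y y \<epsilon> N x = distr (PiM {..<N} (\<lambda>_. fmeas f Y x)) borel (WN f Y y \<epsilon> N x)"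

definition pitilde :: "('x \<Rightarrow> 'y::euclidean_space \<Rightarrow> real) \<Rightarrow> 'y set \<Rightarrow> 'y \<Rightarrow> real \<Rightarrow> nat \<Rightarrow> 'x \<Rightarrow> real measure" where
  "pitilde f Y y \<epsilon> N x = density (Qlaw f Y y \<epsilon> N x) (\<lambda>w. ennreal w)"

definition piABC :: "('x::euclidean_space \<Rightarrow> real) \<Rightarrow> 'x set \<Rightarrow> ('x \<Rightarrow> 'y::euclidean_space \<Rightarrow> real) \<Rightarrow> 'y set \<Rightarrow> 'y \<Rightarrow> real \<Rightarrow> 'x measure" where
  "piABC \<nu> X f Y y \<epsilon> = density lborel (\<lambda>x. ennreal (indicator X x * \<nu> x * lABC f Y y \<epsilon> x /
       (\<integral>x'\<in>X. \<nu> x' * lABC f Y y \<epsilon> x' \<partial>lborel)))"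

end

theory Submission imports Defs "HOL-Probability.Probability" begin

fun ff :: "nat \<Rightarrow> real \<Rightarrow> real" where
  "ff 0 x = 1" | "ff (Suc q) x = ff q x * (x - real q)"

lemma ff_shift: "ff (Suc q) (x + 1) = (x + 1) * ff q x"
  by (induction q) (auto simp: algebra_simps)

lemma ff_diff: "ff (Suc q) (x + 1) = ff (Suc q) x + (real q + 1) * ff q x"
  by (simp only: ff_shift) (simp add: algebra_simps)

lemma ff_zero: "k < q \<Longrightarrow> ff q (real k) = 0"
  by (induction q) (auto simp: less_Suc_eq)

lemma ff_bounds: "0 \<le> ff q (real k) \<and> ff q (real k) \<le> real k ^ q"
proof (induction q)
  case 0 then show ?case by simp
next
  case (Suc q)
  show ?case
  proof (cases "q \<le> k")
    case True
    then have "0 \<le> real k - real q" "real k - real q \<le> real k" by auto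
    moreover have "ff q (real k) * (real k - real q) \<le> real k ^ q * real k"
      using Suc \<open>0 \<le> real k - real q\<close> \<open>real k - real q \<le> real k\<close> by (intro mult_mono) auto
    ultimately show ?thesis using Suc by (simp add: mult.commute)
  next
    case False then show ?thesis using ff_zero[of k q] by simp
  qed
qed

lemma ff_meas[measurable]: "ff q \<in> borel_measurable borel"
  by (induction q) auto

lemma pow_le_ff: "real k ^ Suc q \<le> ff (Suc q) (real k) + (real q + 1)^2 * real k ^ q"
proof (induction q)
  case 0 then show ?case by simp
next
  case (Suc q)
  have b: "ff (Suc q) (real k) \<le> real k ^ Suc q" using ff_bounds by blast
  have "real k ^ Suc (Suc q) = real k * real k ^ Suc q" by simp
  also have "\<dots> \<le> real k * (ff (Suc q) (real k) + (real q + 1)^2 * real k ^ q)"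
    using Suc by (intro mult_left_mono) auto
  also have "\<dots> = ff (Suc (Suc q)) (real k) + (real q + 1) * ff (Suc q) (real k) + (real q + 1)^2 * real k ^ Suc q"
    by (simp add: algebra_simps)
  also have "\<dots> \<le> ff (Suc (Suc q)) (real k) + (real q + 1) * real k ^ Suc q + (real q + 1)^2 * real k ^ Suc q"
    using b by (intro add_mono mult_left_mono) auto
  also have "\<dots> \<le> ff (Suc (Suc q)) (real k) + (real (Suc q) + 1)^2 * real k ^ Suc q"
    by (simp add: power2_eq_square algebra_simps)
  finally show ?case .
qed

lemma powr_lem: assumes a: "0 < (a::real)" and p: "1 \<le> p" shows "a powr (- (real p - 1)) = a / a ^ p"
proof -
  obtain q where q: "p = Suc q" using p by (cases p) auto
  have "a powr (- (real p - 1)) = inverse (a powr (real q))" unfolding q by (simp add: powr_minus)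
  also have "\<dots> = inverse (a ^ q)" using a by (simp add: powr_realpow)
  also have "\<dots> = a / a ^ p" using a unfolding q by (simp add: field_simps)
  finally show ?thesis .
qed

definition cntr :: "'a set \<Rightarrow> nat \<Rightarrow> (nat \<Rightarrow> 'a) \<Rightarrow> real" where
  "cntr B n \<omega> = (\<Sum>j<n. indicator B (\<omega> j))"

lemma cntr_nonneg: "0 \<le> cntr B n \<omega>"
  by (simp add: cntr_def sum_nonneg)

lemma cntr_nat: "\<exists>k\<le>n. cntr B n \<omega> = real k"
proof (induction n)
  case 0 then show ?case by (simp add: cntr_def)
next
  case (Suc n)
  then obtain k where k: "k \<le> n" "cntr B n \<omega> = real k" by blast
  show ?case
  proof (cases "\<omega> n \<in> B")
    case True then show ?thesis using k by (intro exI[of _ "Suc k"]) (auto simp: cntr_def)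
  next
    case False then show ?thesis using k by (intro exI[of _ k]) (auto simp: cntr_def)
  qed
qed

context
  fixes M :: "'a measure" and B :: "'a set"
  assumes M: "prob_space M" and B[measurable]: "B \<in> sets M"
begin

lemma cntr_meas[measurable]: "cntr B n \<in> borel_measurable (PiM {..<n} (\<lambda>_. M))"
  unfolding cntr_def by measurable

lemma P_prob: "prob_space (PiM {..<n} (\<lambda>_. M))"
  by (rule prob_space_PiM) (use M in auto)

lemma cntr_integrable:
  fixes g :: "real \<Rightarrow> real"
  assumes g[measurable]: "g \<in> borel_measurable borel"
  shows "integrable (PiM {..<n} (\<lambda>_. M)) (\<lambda>\<omega>. g (cntr B n \<omega>))"
proof -
  interpret P: prob_space "PiM {..<n} (\<lambda>_. M)" by (rule P_prob)
  show ?thesis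
  proof (rule P.integrable_const_bound[where B="\<Sum>k\<le>n. \<bar>g (real k)\<bar>"])
    show "AE x in PiM {..<n} (\<lambda>_. M). norm (g (cntr B n x)) \<le> (\<Sum>k\<le>n. \<bar>g (real k)\<bar>)"
    proof (rule AE_I2)
      fix \<omega>
      obtain k where k: "k \<le> n" "cntr B n \<omega> = real k" using cntr_nat by blast
      show "norm (g (cntr B n \<omega>)) \<le> (\<Sum>k\<le>n. \<bar>g (real k)\<bar>)"
        using k by (auto intro!: member_le_sum[where f="\<lambda>k. \<bar>g (real k)\<bar>", of k "{..n}", simplified])
    qed
  qed measurable
qed

lemma cntr_step:
  fixes g :: "real \<Rightarrow> real"
  assumes g[measurable]: "g \<in> borel_measurable borel"
  shows "(\<integral>\<omega>. g (cntr B (Suc n) \<omega>) \<partial>PiM {..<Suc n} (\<lambda>_. M)) =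
         (\<integral>\<omega>. measure M B * g (cntr B n \<omega> + 1) + (1 - measure M B) * g (cntr B n \<omega>) \<partial>PiM {..<n} (\<lambda>_. M))"
proof -
  interpret M: prob_space M by (rule M)
  interpret PS: product_sigma_finite "\<lambda>_. M"
    by (simp add: product_sigma_finite_def M.sigma_finite_measure_axioms)
  have eq: "{..<Suc n} = insert n {..<n}" by auto
  have "(\<integral>\<omega>. g (cntr B (Suc n) \<omega>) \<partial>PiM {..<Suc n} (\<lambda>_. M)) =
     (\<integral>\<omega>. (\<integral>y. g (cntr B (Suc n) (fun_upd \<omega> n y)) \<partial>M) \<partial>PiM {..<n} (\<lambda>_. M))"
    unfolding eq by (rule PS.product_integral_insert) (use cntr_integrable[OF g, of "Suc n"] eq in auto)
  also have "\<dots> = (\<integral>\<omega>. measure M B * g (cntr B n \<omega> + 1) + (1 - measure M B) * g (cntr B n \<omega>) \<partial>PiM {..<n} (\<lambda>_. M))"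
  proof (rule Bochner_Integration.integral_cong[OF refl])
    fix \<omega>
    let ?c = "cntr B n \<omega>"
    have c: "cntr B (Suc n) (fun_upd \<omega> n y) = ?c + indicator B y" for y
      by (simp add: cntr_def)
    have "(\<integral>y. g (cntr B (Suc n) (fun_upd \<omega> n y)) \<partial>M) = (\<integral>y. g ?c + (g (?c + 1) - g ?c) * indicator B y \<partial>M)"
      unfolding c by (rule Bochner_Integration.integral_cong) (auto simp: indicator_def)
    also have "\<dots> = g ?c + (g (?c + 1) - g ?c) * measure M B"
      using M.integrable_const[of "g ?c"]
      by (subst Bochner_Integration.integral_add) (auto simp: M.prob_space measure_nonneg M.emeasure_finite less_top[symmetric])
    finally show "(\<integral>y. g (cntr B (Suc n) (fun_upd \<omega> n y)) \<partial>M) = measure M B * g (?c + 1) + (1 - measure M B) * g ?c"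
      by (simp add: algebra_simps)
  qed
  finally show ?thesis .
qed

lemma cntr_ff: "(\<integral>\<omega>. ff q (cntr B n \<omega>) \<partial>PiM {..<n} (\<lambda>_. M)) = ff q (real n) * measure M B ^ q"
proof (induction n arbitrary: q)
  case 0
  interpret P: prob_space "PiM {..<0::nat} (\<lambda>_. M)" by (rule P_prob)
  have "ff q 0 = ff q 0 * measure M B ^ q"
    using ff_zero[of 0 q] by (cases q) auto
  then show ?case using P.prob_space by (simp add: cntr_def)
next
  case (Suc n)
  interpret P: prob_space "PiM {..<n} (\<lambda>_. M)" by (rule P_prob)
  let ?l = "measure M B"
  show ?case
  proof (cases q)
    case 0
    then show ?thesis using prob_space.prob_space[OF P_prob[of "Suc n"]] by simp
  next
    case (Suc r)
    have "(\<integral>\<omega>. ff q (cntr B (Suc n) \<omega>) \<partial>PiM {..<Suc n} (\<lambda>_. M)) =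
      (\<integral>\<omega>. ff q (cntr B n \<omega>) + (?l * (real r + 1)) * ff r (cntr B n \<omega>) \<partial>PiM {..<n} (\<lambda>_. M))"
      unfolding cntr_step[OF ff_meas] Suc ff_diff by (simp add: algebra_simps)
    also have "\<dots> = ff q (real n) * ?l ^ q + (?l * (real r + 1)) * (ff r (real n) * ?l ^ r)"
      using cntr_integrable[OF ff_meas, of n q] cntr_integrable[OF ff_meas, of n r]
      by (simp add: Suc.IH)
    also have "\<dots> = ff q (real (Suc n)) * ?l ^ q"
      using ff_diff[of r "real n"] unfolding Suc by (simp add: algebra_simps)
    finally show ?thesis .
  qed
qed

lemma cntr_moment:
  assumes p: "p \<ge> 1"
  shows "(\<integral>\<omega>. cntr B N \<omega> ^ Suc p \<partial>PiM {..<N} (\<lambda>_. M))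
     \<le> (real N * measure M B) ^ Suc p + (real p + 1)^2 * real N ^ p * measure M B"
proof -
  let ?P = "PiM {..<N} (\<lambda>_. M)"
  let ?l = "measure M B"
  have pw: "cntr B N \<omega> ^ Suc p \<le> ff (Suc p) (cntr B N \<omega>) + ((real p + 1)^2 * real N ^ (p - 1)) * ff 1 (cntr B N \<omega>)" for \<omega>
  proof -
    obtain k where k: "k \<le> N" "cntr B N \<omega> = real k" using cntr_nat by blast
    have "real k ^ p = real k * real k ^ (p - 1)" using p by (cases p) auto
    also have "\<dots> \<le> real k * real N ^ (p - 1)" using k by (intro mult_left_mono power_mono) auto
    finally have "real k ^ p \<le> real k * real N ^ (p - 1)" .
    then have "(real p + 1)^2 * real k ^ p \<le> (real p + 1)^2 * (real k * real N ^ (p - 1))"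
      by (intro mult_left_mono) auto
    then have i: "(real p + 1)^2 * real k ^ p \<le> ((real p + 1)^2 * real N ^ (p - 1)) * real k"
      by (simp add: mult_ac)
    have ff1: "ff 1 x = x" for x by simp
    show ?thesis unfolding k(2) ff1 using pow_le_ff[of k p] i by linarith
  qed
  have "(\<integral>\<omega>. cntr B N \<omega> ^ Suc p \<partial>?P) \<le>
     (\<integral>\<omega>. ff (Suc p) (cntr B N \<omega>) + ((real p + 1)^2 * real N ^ (p - 1)) * ff 1 (cntr B N \<omega>) \<partial>?P)"
    using cntr_integrable[of "\<lambda>x. ff (Suc p) x + ((real p + 1)^2 * real N ^ (p - 1)) * ff 1 x" N]
      cntr_integrable[of "\<lambda>x. x ^ Suc p" N]
    by (intro integral_mono pw) auto
  also have "\<dots> = ff (Suc p) (real N) * ?l ^ Suc p + ((real p + 1)^2 * real N ^ (p - 1)) * (ff 1 (real N) * ?l ^ 1)"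
    using cntr_integrable[OF ff_meas, of N "Suc p"] cntr_integrable[OF ff_meas, of N 1]
    by (simp only: cntr_ff[symmetric] Bochner_Integration.integral_add integrable_mult_right
        Bochner_Integration.integral_mult_right)
  also have "\<dots> \<le> (real N * ?l) ^ Suc p + (real p + 1)^2 * real N ^ p * ?l"
  proof -
    have "ff (Suc p) (real N) * ?l ^ Suc p \<le> real N ^ Suc p * ?l ^ Suc p"
      using ff_bounds[of "Suc p" N] by (intro mult_right_mono) auto
    then have a: "ff (Suc p) (real N) * ?l ^ Suc p \<le> (real N * ?l) ^ Suc p"
      by (simp only: power_mult_distrib)
    have Np: "real N ^ (p - 1) * real N = real N ^ p" using p
      by (metis Suc_diff_le diff_Suc_1 power_Suc2)
    have ff1: "ff 1 x = x" for x by simp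
    have "((real p + 1)^2 * real N ^ (p - 1)) * (ff 1 (real N) * ?l ^ 1) = (real p + 1)^2 * (real N ^ (p - 1) * real N) * ?l"
      unfolding ff1 by (simp add: mult_ac)
    then have b: "((real p + 1)^2 * real N ^ (p - 1)) * (ff 1 (real N) * ?l ^ 1) = (real p + 1)^2 * real N ^ p * ?l"
      unfolding Np .
    show ?thesis using a b by linarith
  qed
  finally show ?thesis .
qed

lemma key:
  assumes l: "measure M B > 0" and N: "N \<ge> 1" and p: "p \<ge> 1" and s: "s > 0"
  shows "emeasure (density (distr (PiM {..<N} (\<lambda>_. M)) borel
            (\<lambda>\<omega>. (1/real N) * (\<Sum>j<N. if \<omega> j \<in> B then 1 / measure M B else 0))) (\<lambda>w. ennreal w)) {s..}
     \<le> ennreal (s powr (-real p) * (1 + (real p + 1)^2 / (real N * measure M B ^ p)))"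
proof -
  let ?P = "PiM {..<N} (\<lambda>_. M)"
  let ?l = "measure M B"
  define W where "W = (\<lambda>\<omega>. (1/real N) * (\<Sum>j<N. if \<omega> j \<in> B then 1 / ?l else 0))"
  define c where "c = real N * ?l"
  have c: "c > 0" using l N by (simp add: c_def)
  interpret P: prob_space ?P by (rule P_prob)
  have W: "W \<omega> = cntr B N \<omega> / c" for \<omega>
  proof -
    have "(\<Sum>j<N. if \<omega> j \<in> B then 1 / ?l else 0) = (\<Sum>j<N. indicator B (\<omega> j) / ?l)"
      by (rule sum.cong) (auto simp: indicator_def)
    then show ?thesis by (simp add: W_def cntr_def c_def sum_divide_distrib[symmetric])
  qed
  have Wm[measurable]: "W \<in> borel_measurable ?P" unfolding W by measurable
  have "emeasure (density (distr ?P borel W) (\<lambda>w. ennreal w)) {s..} = (\<integral>\<^sup>+ w. ennreal w * indicator {s..} w \<partial>distr ?P borel W)"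
    by (rule emeasure_density) auto
  also have "\<dots> = (\<integral>\<^sup>+ \<omega>. ennreal (W \<omega>) * indicator {s..} (W \<omega>) \<partial>?P)"
    by (rule nn_integral_distr) auto
  also have "\<dots> \<le> (\<integral>\<^sup>+ \<omega>. ennreal (W \<omega> ^ Suc p / s ^ p) \<partial>?P)"
  proof (rule nn_integral_mono)
    fix \<omega>
    show "ennreal (W \<omega>) * indicator {s..} (W \<omega>) \<le> ennreal (W \<omega> ^ Suc p / s ^ p)"
    proof (cases "s \<le> W \<omega>")
      case True
      have "s ^ p \<le> W \<omega> ^ p" using True s by (intro power_mono) auto
      then have "W \<omega> * s ^ p \<le> W \<omega> * W \<omega> ^ p" using True s by (intro mult_left_mono) auto
      then have "W \<omega> \<le> W \<omega> ^ Suc p / s ^ p" using s by (simp add: field_simps)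
      then show ?thesis using True by (simp add: ennreal_leI)
    qed simp
  qed
  also have "\<dots> = ennreal (\<integral>\<omega>. W \<omega> ^ Suc p / s ^ p \<partial>?P)"
  proof (rule nn_integral_eq_integral)
    show "integrable ?P (\<lambda>\<omega>. W \<omega> ^ Suc p / s ^ p)"
      unfolding W using cntr_integrable[of "\<lambda>x. (x / c) ^ Suc p / s ^ p" N] by simp
    show "AE x in ?P. 0 \<le> W x ^ Suc p / s ^ p"
    proof (rule AE_I2)
      fix x
      have "0 \<le> W x" using c by (simp add: W cntr_nonneg)
      then show "0 \<le> W x ^ Suc p / s ^ p" using s by simp
    qed
  qed
  also have "\<dots> \<le> ennreal (s powr (-real p) * (1 + (real p + 1)^2 / (real N * ?l ^ p)))"
  proof (rule ennreal_leI)
    have "(\<integral>\<omega>. W \<omega> ^ Suc p / s ^ p \<partial>?P) = (\<integral>\<omega>. cntr B N \<omega> ^ Suc p \<partial>?P) / c ^ Suc p / s ^ p"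
      by (simp add: W power_divide)
    also have "\<dots> \<le> (c ^ Suc p + (real p + 1)^2 * real N ^ p * ?l) / c ^ Suc p / s ^ p"
      using cntr_moment[OF p, of N] c s unfolding c_def
      by (intro divide_right_mono) auto
    also have "\<dots> = s powr (-real p) * (1 + (real p + 1)^2 / (real N * ?l ^ p))"
      using c s l N unfolding c_def
      by (simp add: powr_minus powr_realpow field_simps power_mult_distrib)
    finally show "(\<integral>\<omega>. W \<omega> ^ Suc p / s ^ p \<partial>?P) \<le> s powr (-real p) * (1 + (real p + 1)^2 / (real N * ?l ^ p))" .
  qed
  finally show ?thesis unfolding W_def .
qed

end

theorem proposition48:
  fixes \<nu> :: "'x::euclidean_space \<Rightarrow> real" and X :: "'x set"
    and f :: "'x \<Rightarrow> 'y::euclidean_space \<Rightarrow> real" and Y :: "'y set"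
    and y :: 'y and \<epsilon> :: real
  assumes X_meas: "X \<in> sets lborel" and Y_meas: "Y \<in> sets lborel"
    and \<nu>_meas: "\<nu> \<in> borel_measurable borel"
    and \<nu>_nonneg: "\<And>x. x \<in> X \<Longrightarrow> \<nu> x \<ge> 0"
    and \<nu>_int: "set_integrable lborel X \<nu>" and \<nu>_prob: "(\<integral>x\<in>X. \<nu> x \<partial>lborel) = 1"
    and f_meas: "(\<lambda>(x, z). f x z) \<in> borel_measurable borel"
    and f_nonneg: "\<And>x z. x \<in> X \<Longrightarrow> z \<in> Y \<Longrightarrow> f x z \<ge> 0"
    and f_int: "\<And>x. x \<in> X \<Longrightarrow> set_integrable lborel Y (f x)"
    and f_prob: "\<And>x. x \<in> X \<Longrightarrow> (\<integral>z\<in>Y. f x z \<partial>lborel) = 1"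
    and y_in: "y \<in> Y" and eps_pos: "\<epsilon> > 0"
    and l_pos: "\<And>x. x \<in> X \<Longrightarrow> lABC f Y y \<epsilon> x > 0"
  shows "(\<forall>p::nat. p \<ge> 1 \<longrightarrow>
            (\<integral>\<^sup>+x\<in>X. ennreal (\<nu> x * lABC f Y y \<epsilon> x powr (- (real p - 1))) \<partial>lborel) < \<infinity> \<longrightarrow>
            (\<exists>C :: nat \<Rightarrow> real.
               (\<forall>N\<ge>1. C N > 0 \<and>
                  (\<forall>s>0. (\<integral>\<^sup>+x. emeasure (pitilde f Y y \<epsilon> N x) {s..} \<partial>piABC \<nu> X f Y y \<epsilon>)
                          \<le> ennreal (C N * s powr (- real p)))) \<and>
               (\<lambda>N. C N - 1) \<in> O[sequentially](\<lambda>N. 1 / real N)))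
         \<and> (\<integral>\<^sup>+x\<in>X. ennreal (\<nu> x * lABC f Y y \<epsilon> x powr (- (real (1::nat) - 1))) \<partial>lborel) < \<infinity>"
proof -
  define l where "l = lABC f Y y \<epsilon>"
  define Bs where "Bs = {z::'y. norm (z - y) < \<epsilon>}"
  have Bs_sets[measurable]: "Bs \<in> sets borel" unfolding Bs_def by measurable
  have fm[measurable]: "(\<lambda>(x, z). f x z) \<in> borel_measurable (lborel \<Otimes>\<^sub>M lborel)"
    using f_meas by (simp add: lborel_prod)
  have fxm[measurable]: "f x \<in> borel_measurable borel" for x
    using measurable_Pair2[OF fm, of x] by simp
  have \<nu>m[measurable]: "\<nu> \<in> borel_measurable lborel" using \<nu>_meas by simp
  have X_sets[measurable]: "X \<in> sets borel" using X_meas by simp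
  have Y_sets[measurable]: "Y \<in> sets borel" using Y_meas by simp
  have l_eq: "l x = enn2real (\<integral>\<^sup>+ z. ennreal (indicator Y z * f x z) * indicator Bs z \<partial>lborel)" for x
    unfolding l_def lABC_def fmeas_def measure_def Bs_def[symmetric]
    by (subst emeasure_density) auto
  have lm[measurable]: "l \<in> borel_measurable lborel"
    unfolding l_eq[abs_def] by measurable
  have prob: "prob_space (fmeas f Y x)" if x: "x \<in> X" for x
  proof (rule prob_spaceI)
    have int: "integrable lborel (\<lambda>z. indicator Y z * f x z)"
      using f_int[OF x] by (simp add: set_integrable_def)
    have "emeasure (fmeas f Y x) (space (fmeas f Y x)) = (\<integral>\<^sup>+ z. ennreal (indicator Y z * f x z) \<partial>lborel)"
      unfolding fmeas_def by (subst emeasure_density) auto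
    also have "\<dots> = ennreal (\<integral>z. indicator Y z * f x z \<partial>lborel)"
      by (rule nn_integral_eq_integral[OF int]) (auto intro!: AE_I2 simp: indicator_def f_nonneg[OF x])
    also have "\<dots> = 1" using f_prob[OF x] by (simp add: set_lebesgue_integral_def)
    finally show "emeasure (fmeas f Y x) (space (fmeas f Y x)) = 1" .
  qed
  have Bs_in: "Bs \<in> sets (fmeas f Y x)" for x by (simp add: fmeas_def)
  have l_pos': "x \<in> X \<Longrightarrow> 0 < l x" for x using l_pos by (simp add: l_def)
  have l_le1: "x \<in> X \<Longrightarrow> l x \<le> 1" for x
    using prob_space.prob_le_1[OF prob] by (simp add: l_def lABC_def)

  have lpowr: "l x powr (- (real p - 1)) = l x / l x ^ p" if "x \<in> X" "p \<ge> 1" for x p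
    using powr_lem[OF l_pos'[OF that(1)] that(2)] .
  define Z where "Z = (\<integral>x\<in>X. \<nu> x * l x \<partial>lborel)"
  define d where "d = (\<lambda>x. ennreal (indicator X x * \<nu> x * l x / Z))"
  have pi_eq: "piABC \<nu> X f Y y \<epsilon> = density lborel d"
    unfolding piABC_def d_def Z_def l_def ..
  have dm[measurable]: "d \<in> borel_measurable lborel" unfolding d_def by measurable
  have intZ: "integrable lborel (\<lambda>x. indicator X x * \<nu> x * l x)"
  proof (rule Bochner_Integration.integrable_bound)
    show "integrable lborel (\<lambda>x. indicator X x * \<nu> x)"
      using \<nu>_int by (simp add: set_integrable_def)
    show "AE x in lborel. norm (indicator X x * \<nu> x * l x) \<le> norm (indicator X x * \<nu> x)"
    proof (rule AE_I2)
      fix x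
      show "norm (indicator X x * \<nu> x * l x) \<le> norm (indicator X x * \<nu> x)"
      proof (cases "x \<in> X")
        case True
        then have "\<nu> x * l x \<le> \<nu> x" using l_le1 \<nu>_nonneg mult_left_le by blast
        then show ?thesis using True l_pos'[OF True] \<nu>_nonneg[OF True] by simp
      qed simp
    qed
  qed measurable
  have Zeq: "(\<integral>\<^sup>+x. ennreal (indicator X x * \<nu> x * l x) \<partial>lborel) = ennreal Z"
    unfolding Z_def set_lebesgue_integral_def
    by (subst nn_integral_eq_integral[OF intZ])
       (auto intro!: AE_I2 simp: indicator_def \<nu>_nonneg l_pos' less_imp_le mult.assoc)
  have main: "(\<integral>\<^sup>+x. emeasure (pitilde f Y y \<epsilon> N x) {s..} \<partial>piABC \<nu> X f Y y \<epsilon>)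
      \<le> ennreal ((1 + (real p + 1)^2 * enn2real (\<integral>\<^sup>+x\<in>X. ennreal (\<nu> x * l x powr (- (real p - 1))) \<partial>lborel) / (real N * Z)) * s powr (- real p))"
    if p: "p \<ge> 1" and fin: "(\<integral>\<^sup>+x\<in>X. ennreal (\<nu> x * l x powr (- (real p - 1))) \<partial>lborel) < \<infinity>"
      and N: "N \<ge> 1" and s: "s > 0" for p N s
  proof (cases "Z \<le> 0")
    case True
    have "d = (\<lambda>_. 0)"
    proof
      fix x
      have "indicator X x * \<nu> x * l x / Z \<le> 0"
        using True by (intro divide_nonneg_nonpos)
          (auto simp: indicator_def \<nu>_nonneg l_pos' less_imp_le)
      then show "d x = 0" unfolding d_def by (rule ennreal_neg)
    qed
    then have "piABC \<nu> X f Y y \<epsilon> = null_measure lborel"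
      by (simp add: pi_eq null_measure_eq_density)
    then show ?thesis by simp
  next
    case False
    then have Zp: "Z > 0" by simp
    have Np: "real N > 0" using N by simp
    define K where "K = (real p + 1)^2"
    define A' where "A' = (\<integral>\<^sup>+x\<in>X. ennreal (\<nu> x * l x powr (- (real p - 1))) \<partial>lborel)"
    define A where "A = enn2real A'"
    have A'A: "A' = ennreal A" using fin unfolding A_def A'_def by (simp add: ennreal_enn2real less_top)
    have A0: "A \<ge> 0" by (simp add: A_def)
    define h where "h = (\<lambda>x. ennreal (s powr (- real p) * (1 + K / (real N * l x ^ p))))"
    have hm[measurable]: "h \<in> borel_measurable lborel" unfolding h_def by measurable
    define c1 where "c1 = s powr (- real p) / Z"
    define c2 where "c2 = s powr (- real p) * K / (real N * Z)"
    have c1: "c1 \<ge> 0" and c2: "c2 \<ge> 0" using Zp Np by (auto simp: c1_def c2_def K_def)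
    have "(\<integral>\<^sup>+x. emeasure (pitilde f Y y \<epsilon> N x) {s..} \<partial>piABC \<nu> X f Y y \<epsilon>) \<le> (\<integral>\<^sup>+x. h x \<partial>density lborel d)"
      unfolding pi_eq
    proof (rule nn_integral_mono_AE)
      show "AE x in density lborel d. emeasure (pitilde f Y y \<epsilon> N x) {s..} \<le> h x"
        unfolding AE_density[OF dm]
      proof (rule AE_I2, rule impI)
        fix x assume "0 < d x"
        then have x: "x \<in> X" by (cases "x \<in> X") (auto simp: d_def)
        have ml: "measure (fmeas f Y x) Bs = l x" by (simp add: l_def lABC_def Bs_def)
        have eqW: "WN f Y y \<epsilon> N x = (\<lambda>\<omega>. (1/real N) * (\<Sum>j<N. if \<omega> j \<in> Bs then 1 / measure (fmeas f Y x) Bs else 0))"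
          unfolding ml l_def by (simp add: WN_def Bs_def fun_eq_iff)
        show "emeasure (pitilde f Y y \<epsilon> N x) {s..} \<le> h x"
          using key[OF prob[OF x] Bs_in, of N p s] l_pos'[OF x] N p s
          unfolding pitilde_def Qlaw_def eqW h_def K_def ml by simp
      qed
    qed
    also have "\<dots> = (\<integral>\<^sup>+x. d x * h x \<partial>lborel)"
      by (rule nn_integral_density) auto
    also have "\<dots> = (\<integral>\<^sup>+x. ennreal c1 * ennreal (indicator X x * \<nu> x * l x)
                       + ennreal c2 * (ennreal (\<nu> x * l x powr (- (real p - 1))) * indicator X x) \<partial>lborel)"
    proof (rule nn_integral_cong)
      fix x
      show "d x * h x = ennreal c1 * ennreal (indicator X x * \<nu> x * l x)
                       + ennreal c2 * (ennreal (\<nu> x * l x powr (- (real p - 1))) * indicator X x)"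
      proof (cases "x \<in> X")
        case True
        have lp: "l x > 0" using l_pos'[OF True] .
        have nu: "\<nu> x \<ge> 0" using \<nu>_nonneg[OF True] .
        have e1: "d x * h x = ennreal (\<nu> x * l x / Z * (s powr (- real p) * (1 + K / (real N * l x ^ p))))"
          unfolding d_def h_def using True lp nu Zp Np s
          by (subst ennreal_mult[symmetric]) (auto simp: K_def intro!: add_nonneg_nonneg)
        have e2: "ennreal c1 * ennreal (indicator X x * \<nu> x * l x)
                       + ennreal c2 * (ennreal (\<nu> x * l x powr (- (real p - 1))) * indicator X x)
              = ennreal (c1 * (\<nu> x * l x) + c2 * (\<nu> x * (l x / l x ^ p)))"
          using True lp nu c1 c2 lpowr[OF True p]
          by (simp add: ennreal_mult[symmetric] ennreal_plus[symmetric] del: ennreal_plus)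
        have "\<nu> x * l x / Z * (s powr (- real p) * (1 + K / (real N * l x ^ p)))
             = c1 * (\<nu> x * l x) + c2 * (\<nu> x * (l x / l x ^ p))"
          unfolding c1_def c2_def using lp Zp Np by (simp add: field_simps)
        then show ?thesis using e1 e2 by simp
      qed (simp add: d_def)
    qed
    also have "\<dots> = ennreal c1 * (\<integral>\<^sup>+x. ennreal (indicator X x * \<nu> x * l x) \<partial>lborel) + ennreal c2 * A'"
      unfolding A'_def by (subst nn_integral_add) (auto simp: nn_integral_cmult)
    also have "\<dots> = ennreal (c1 * Z + c2 * A)"
      unfolding Zeq A'A using c1 c2 Zp A0 by (simp add: ennreal_mult[symmetric] ennreal_plus[symmetric] del: ennreal_plus)
    also have "c1 * Z + c2 * A = (1 + (real p + 1)^2 * A / (real N * Z)) * s powr (- real p)"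
      unfolding c1_def c2_def K_def using Zp Np by (simp add: field_simps)
    finally show ?thesis unfolding A_def A'_def .
  qed
  show ?thesis
  proof (intro conjI allI impI)
    fix p :: nat
    assume p: "p \<ge> 1"
      and fin: "(\<integral>\<^sup>+x\<in>X. ennreal (\<nu> x * lABC f Y y \<epsilon> x powr (- (real p - 1))) \<partial>lborel) < \<infinity>"
    define A where "A = enn2real (\<integral>\<^sup>+x\<in>X. ennreal (\<nu> x * l x powr (- (real p - 1))) \<partial>lborel)"
    define C where "C = (\<lambda>N. 1 + (real p + 1)^2 * A / (real N * Z))"
    show "\<exists>C :: nat \<Rightarrow> real.
               (\<forall>N\<ge>1. C N > 0 \<and>
                  (\<forall>s>0. (\<integral>\<^sup>+x. emeasure (pitilde f Y y \<epsilon> N x) {s..} \<partial>piABC \<nu> X f Y y \<epsilon>)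
                          \<le> ennreal (C N * s powr (- real p)))) \<and>
               (\<lambda>N. C N - 1) \<in> O[sequentially](\<lambda>N. 1 / real N)"
    proof (intro exI[of _ C] conjI allI impI)
      have A0: "A \<ge> 0" by (simp add: A_def)
      have Z0: "Z \<ge> 0" unfolding Z_def set_lebesgue_integral_def
        by (intro Bochner_Integration.integral_nonneg) (auto simp: indicator_def \<nu>_nonneg l_pos' less_imp_le)
      fix N :: nat assume N: "N \<ge> 1"
      show "C N > 0" unfolding C_def using A0 Z0 N by (simp add: add_pos_nonneg)
      fix s :: real assume s: "s > 0"
      show "(\<integral>\<^sup>+x. emeasure (pitilde f Y y \<epsilon> N x) {s..} \<partial>piABC \<nu> X f Y y \<epsilon>) \<le> ennreal (C N * s powr (- real p))"
        using main[OF p fin[folded l_def] N s] unfolding C_def A_def .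
    next
      show "(\<lambda>N. C N - 1) \<in> O[sequentially](\<lambda>N. 1 / real N)"
      proof (rule bigoI[where c = "\<bar>(real p + 1)^2 * A / Z\<bar>"])
        show "\<forall>\<^sub>F N in sequentially. norm (C N - 1) \<le> \<bar>(real p + 1)^2 * A / Z\<bar> * norm (1 / real N)"
          by (intro always_eventually allI) (simp add: C_def abs_mult abs_divide mult.commute)
      qed
    qed
  next
    have "(\<integral>\<^sup>+x\<in>X. ennreal (\<nu> x * lABC f Y y \<epsilon> x powr (- (real (1::nat) - 1))) \<partial>lborel)
        \<le> (\<integral>\<^sup>+x. ennreal (indicator X x * \<nu> x) \<partial>lborel)"
      by (intro nn_integral_mono) (auto simp: indicator_def l_pos'[unfolded l_def])
    also have "\<dots> = ennreal 1"
      using \<nu>_int \<nu>_prob unfolding set_integrable_def set_lebesgue_integral_def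
      by (subst nn_integral_eq_integral) (auto intro!: AE_I2 simp: indicator_def \<nu>_nonneg)
    finally show "(\<integral>\<^sup>+x\<in>X. ennreal (\<nu> x * lABC f Y y \<epsilon> x powr (- (real (1::nat) - 1))) \<partial>lborel) < \<infinity>"
      by (simp add: le_less_trans)
  qed
qed

end
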